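(* Let $t\in\mathbb{N}$ be a constant, let $n=2^m$, and let $\beta=\log_2\sqrt[t+1]{2^{t+1}-1}$. Then the running time of $\mathrm{cover}(\mathbf{v},r)$ (described in the context) on inputs $\mathbf{v}\in\mathbb{F}_2^{t\times n}$ is: $O(n^{t+1})$ when $r$ is constant; $O(n^{(t+1)(1-\alpha\beta)})$ when $r=\alpha m$ with $0<\alpha<\frac{t}{(t+1)\beta}$ constant; and $O(n\log n)$ when $r=m-s$ with $s$ constant, or when $r=\alpha m$ with $\frac{t}{(t+1)\beta}\leq \alpha<1$ constant.
   Context: For a $t\times n$ binary matrix $\mathbf{v}$ with rows $\overline{v}_1,\dots,\overline{v}_t$, $\mathrm{wt}^{(t)}(\mathbf{v})=\left|\bigcup_{i} \mathrm{supp}(\overline{v}_i)\right|$ and $d^{(t)}(\mathbf{u},\mathbf{v})=\mathrm{wt}^{(t)}(\mathbf{u}-\mathbf{v})$. For a linear code $C\subseteq\mathbb{F}_2^n$, $C^t$ is the set of $t\times n$ matrices all of whose rows lie in $C$. Reed–Muller codes: $\mathrm{RM}(0,m)=\{\overline{0},\overline{1}\}\subseteq\mathbb{F}_2^{2^m}$, $\mathrm{RM}(m,m)=\mathbb{F}_2^{2^m}$, and for $1\leq r\leq m-1$, $\mathrm{RM}(r,m)=\{(\overline{u},\overline{u}+\overline{v}) : \overline{u}\in \mathrm{RM}(r,m-1),\ \overline{v}\in\mathrm{RM}(r-1,m-1)\}$. The algorithm: $\mathrm{recursive}(\mathbf{v},r)$, for $\mathbf{v}\in\mathbb{F}_2^{t\times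 2^m}$ and $1\le r\le m$: if $r=m$, return $\mathbf{v}$; if $r=1$, return a matrix $\mathbf{c}\in\mathrm{RM}(1,m)^t$ minimizing $d^{(t)}(\mathbf{v},\mathbf{c})$, found by exhaustively computing $d^{(t)}(\mathbf{v},\mathbf{c})$ for every $\mathbf{c}\in\mathrm{RM}(1,m)^t$; otherwise write $\mathbf{v}=(\mathbf{v}_1,\mathbf{v}_2)$ with $\mathbf{v}_1,\mathbf{v}_2\in\mathbb{F}_2^{t\times 2^{m-1}}$ (first and second halves of the columns), compute $\mathbf{c}_1=\mathrm{recursive}(\mathbf{v}_1,r)$ and $\mathbf{c}_2=\mathrm{recursive}(\mathbf{v}_2-\mathbf{c}_1,r-1)$, and return $(\mathbf{c}_1,\mathbf{c}_1+\mathbf{c}_2)$. $\mathrm{subadditive}(\mathbf{v},r)$: apply $\mathrm{recursive}$ separately to each row of $\mathbf{v}$ and stack the results. $\mathrm{cover}(\mathbf{v},r)$: compute $\mathrm{recursive}(\mathbf{v},r)$ and $\mathrm{subadditive}(\mathbf{v},r)$ and return whichever is closer to $\mathbf{v}$ in $d^{(t)}$. *)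

theory Defs
  imports Complex_Main "HOL-Library.Landau_Symbols"
begin

text \<open>Binary vectors of length 2^m are bool lists; addition over F_2 is pointwise xor.\<close>

fun RM :: "nat \<Rightarrow> nat \<Rightarrow> bool list set" where
  "RM 0 m = {replicate (2^m) False, replicate (2^m) True}"
| "RM (Suc r) m =
     (if m \<le> Suc r then {xs. length xs = 2^m}
      else {u @ map2 (\<noteq>) u v | u v. u \<in> RM (Suc r) (m - 1) \<and> v \<in> RM r (m - 1)})"

text \<open>Running time (number of elementary bit operations) of recursive(v, r) on a
  t x 2^m input matrix v, following the algorithm step by step:
  \<^item> r = m: return v (reading the t*2^m input entries);
  \<^item> r = 1: exhaustive search over all |RM(1,m)|^t matrices of RM(1,m)^t, computing
    d^(t)(v,c) for each candidate at cost t*2^m;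
  \<^item> otherwise: splitting v and the subtraction / addition of t x 2^(m-1) matrices
    (cost t*2^m) plus the two recursive calls.\<close>

function rec_cost :: "nat \<Rightarrow> nat \<Rightarrow> nat \<Rightarrow> nat" where
  "rec_cost t m r =
     (if m \<le> r then t * 2^m
      else if r \<le> 1 then card (RM 1 m) ^ t * (t * 2^m)
      else t * 2^m + rec_cost t (m - 1) r + rec_cost t (m - 1) (r - 1))"
  by auto
termination by (relation "measure (\<lambda>(t, m, r). m)") auto

text \<open>Running time of subadditive(v, r): recursive applied to each of the t rows
  (each a 1 x 2^m matrix), plus stacking the results.\<close>

definition subadd_cost :: "nat \<Rightarrow> nat \<Rightarrow> nat \<Rightarrow> nat" where
  "subadd_cost t m r = t * rec_cost 1 m r + t * 2^m"

text \<open>Running time of cover(v, r): both algorithms, plus computing the two distances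
  d^(t) to v (cost t*2^m each) and comparing them.\<close>

definition cover_cost :: "nat \<Rightarrow> nat \<Rightarrow> nat \<Rightarrow> nat" where
  "cover_cost t m r = rec_cost t m r + subadd_cost t m r + 2 * (t * 2^m) + 1"

end

theory Submission
  imports Defs
begin

declare RM.simps[simp del]

lemma finite_RM: "finite (RM r m)"
proof (induction r m rule: RM.induct)
  case (1 m) then show ?case by (simp add: RM.simps)
next
  case (2 r m)
  show ?case
  proof (cases "m \<le> Suc r")
    case True
    then have "RM (Suc r) m = {xs. set xs \<subseteq> UNIV \<and> length xs = 2^m}" by (simp add: RM.simps)
    then show ?thesis using finite_lists_length_eq[of "UNIV::bool set" "2^m"] by simp
  next
    case False
    have "RM (Suc r) m = (\<lambda>(u,v). u @ map2 (\<noteq>) u v) ` (RM (Suc r) (m - 1) \<times> RM r (m - 1))"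
      unfolding RM.simps(2)[of r m] using False by auto
    then show ?thesis using False 2 by simp
  qed
qed

lemma card_RM0: "card (RM 0 m) \<le> 2"
  by (simp add: card_insert_le_m1 RM.simps)

lemma card_RM1: "card (RM 1 m) \<le> 2^(m+1)"
proof (induction m)
  case 0
  have "RM 1 0 = {xs. set xs \<subseteq> UNIV \<and> length xs = 1}" by (simp add: RM.simps)
  then show ?case using card_lists_length_eq[of "UNIV::bool set" 1] by simp
next
  case (Suc m)
  show ?case
  proof (cases "m = 0")
    case True
    have "RM 1 1 = {xs. set xs \<subseteq> UNIV \<and> length xs = 2}" by (simp add: RM.simps)
    then show ?thesis using True card_lists_length_eq[of "UNIV::bool set" 2] by simp
  next
    case False
    have eq: "RM 1 (Suc m) = (\<lambda>(u,v). u @ map2 (\<noteq>) u v) ` (RM 1 m \<times> RM 0 m)"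
      unfolding RM.simps(2)[of 0 "Suc m"] One_nat_def using False by auto
    have "card (RM 1 (Suc m)) \<le> card (RM 1 m \<times> RM 0 m)"
      unfolding eq by (intro card_image_le finite_cartesian_product finite_RM)
    also have "\<dots> = card (RM 1 m) * card (RM 0 m)" by (simp add: card_cartesian_product)
    also have "\<dots> \<le> 2^(m+1) * 2" using Suc.IH card_RM0 by (intro mult_mono) auto
    finally show ?thesis by simp
  qed
qed

declare rec_cost.simps[simp del]

lemma rec_cost_bound:
  "real (rec_cost t m r) \<le> real t * 2^t * ((2::real)^(t+1) - 1) * ((2::real)^(t+1))^m / ((2::real)^(t+1) - 1)^r
      + real t * (real m + 1) * 2^m"
proof (induction t m r rule: rec_cost.induct)
  case (1 t m r)
  define q where "q = (2::real)^(t+1) - 1"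
  define N where "N = (2::real)^(t+1)"
  have "(2::real)^1 \<le> 2^(t+1)" by (rule power_increasing) auto
  then have q1: "q \<ge> 1" unfolding q_def by simp
  have Nq: "N = q + 1" unfolding N_def q_def by simp
  have first_nn: "0 \<le> real t * 2^t * q * N^m / q^r" using q1 unfolding N_def by simp
  show ?case
  proof (cases "m \<le> r")
    case True
    then have "real (rec_cost t m r) = real t * 2^m" by (simp add: rec_cost.simps)
    also have "\<dots> \<le> real t * (real m + 1) * 2^m"
    proof -
      have "real t * 2^m * 1 \<le> real t * 2^m * (real m + 1)" by (intro mult_left_mono) auto
      then show ?thesis by (simp add: algebra_simps)
    qed
    finally show ?thesis using first_nn unfolding q_def N_def by linarith
  next
    case nle: False
    show ?thesis
    proof (cases "r \<le> 1")
      case True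
      then have "real (rec_cost t m r) = real (card (RM 1 m)) ^ t * (real t * 2^m)"
        using nle by (simp add: rec_cost.simps)
      also have "\<dots> \<le> (2^(m+1)) ^ t * (real t * 2^m)"
      proof -
        have "real (card (RM 1 m)) \<le> 2^(m+1)" using card_RM1[of m]
          by (metis of_nat_le_iff of_nat_numeral of_nat_power)
        then show ?thesis by (intro mult_right_mono power_mono) auto
      qed
      also have "\<dots> = real t * 2^t * N^m"
        unfolding N_def by (simp add: power_add power_mult[symmetric] power_mult_distrib algebra_simps)
      also have "\<dots> \<le> real t * 2^t * q * N^m / q^r"
      proof -
        have "q^r \<le> q" using True q1 by (cases r) auto
        moreover have "q^r > 0" using q1 by simp
        ultimately have "1 \<le> q / q^r" by simp
        then have "real t * 2^t * N^m * 1 \<le> real t * 2^t * N^m * (q / q^r)"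
          by (intro mult_left_mono) (auto simp: N_def)
        then show ?thesis by (simp add: algebra_simps)
      qed
      finally show ?thesis unfolding q_def N_def by (smt (verit) mult_nonneg_nonneg of_nat_0_le_iff zero_le_power)
    next
      case False
      then obtain m' r' where m: "m = Suc m'" and r: "r = Suc r'" using nle
        by (metis Suc_pred' le_0_eq less_nat_zero_code neq0_conv not_le_imp_less)
      have "real (rec_cost t m r) = real t * 2^m + real (rec_cost t (m - 1) r) + real (rec_cost t (m - 1) (r - 1))"
        using nle False by (simp add: rec_cost.simps[of t m r])
      also have "\<dots> \<le> real t * 2^m
          + (real t * 2^t * q * N^m' / q^r + real t * (real m' + 1) * 2^m')
          + (real t * 2^t * q * N^m' / q^r' + real t * (real m' + 1) * 2^m')"
        using "1.IH"(1)[OF nle False] "1.IH"(2)[OF nle False] unfolding m r q_def N_def by simp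
      also have "\<dots> = real t * 2^t * q * N^m / q^r + real t * (real m + 1) * 2^m"
      proof -
        have "q^r' > 0" using q1 by simp
        have "real t * 2^t * q * N^m' / q^r + real t * 2^t * q * N^m' / q^r'
            = real t * 2^t * q * N^m' * (1 + q) / q^r"
          unfolding r using q1 by (simp add: field_simps)
        also have "\<dots> = real t * 2^t * q * N^m / q^r" unfolding m Nq by (simp add: algebra_simps)
        finally show ?thesis unfolding m by (simp add: algebra_simps)
      qed
      finally show ?thesis unfolding q_def N_def .
    qed
  qed
qed

lemma cover_bound:
  fixes t m r :: nat
  defines "q \<equiv> (2::real)^(t+1) - 1" and "N \<equiv> (2::real)^(t+1)"
  defines "A \<equiv> real t * 2^t * q + 6 * real t + 5 * real t + 1"
  shows "real (cover_cost t m r) \<le> A * (N^m / q^r + 4^m / 3^r + (real m + 1) * 2^m)"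
proof -
  have "(2::real)^1 \<le> 2^(t+1)" by (rule power_increasing) auto
  then have q1: "q \<ge> 1" unfolding q_def by simp
  define X where "X = N^m / q^r"
  define Y where "Y = (4::real)^m / 3^r"
  define P where "P = (real m + 1) * 2^m"
  have X0: "X \<ge> 0" unfolding X_def N_def using q1 by simp
  have Y0: "Y \<ge> 0" unfolding Y_def by simp
  have P1: "(2::real)^m \<le> P" unfolding P_def by simp
  have "(1::real) \<le> 2^m" by simp
  with P1 have P2: "1 \<le> P" by linarith
  have rt: "real (rec_cost t m r) \<le> real t * 2^t * q * X + real t * P"
    using rec_cost_bound[of t m r] unfolding q_def N_def X_def P_def by (simp add: mult.assoc)
  have r1: "real (rec_cost 1 m r) \<le> 6 * Y + P"
    using rec_cost_bound[of 1 m r] unfolding Y_def P_def by simp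
  have "real (cover_cost t m r) = real (rec_cost t m r) + real t * real (rec_cost 1 m r) + real t * 2^m + 2 * (real t * 2^m) + 1"
    by (simp add: cover_cost_def subadd_cost_def)
  also have "\<dots> \<le> (real t * 2^t * q * X + real t * P) + real t * (6 * Y + P) + real t * P + 2 * (real t * P) + P"
    using rt r1 P1 P2 by (intro add_mono mult_left_mono) auto
  also have "\<dots> = (real t * 2^t * q) * X + (6 * real t) * Y + (5 * real t + 1) * P"
    by (simp add: algebra_simps)
  also have "\<dots> \<le> A * X + A * Y + A * P"
    unfolding A_def using X0 Y0 P2 q1 by (intro add_mono mult_right_mono) auto
  finally show ?thesis unfolding X_def Y_def P_def by (simp add: algebra_simps)
qed

lemma exp_bound:
  fixes N q \<alpha> :: real and m r :: nat
  assumes "N > 0" "q \<ge> 1" "real r \<ge> \<alpha> * real m - 1"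
  shows "N^m / q^r \<le> q * 2 powr ((log 2 N - \<alpha> * log 2 q) * real m)"
proof -
  define L where "L = log 2 q"
  have L0: "L \<ge> 0" unfolding L_def using assms by simp
  have "N^m = 2 powr (log 2 N * real m)"
    using assms by (simp add: powr_powr[symmetric] powr_realpow)
  moreover have "q^r = 2 powr (L * real r)"
    unfolding L_def using assms by (simp add: powr_powr[symmetric] powr_realpow)
  ultimately have "N^m / q^r = 2 powr (log 2 N * real m - L * real r)"
    by (simp add: powr_diff)
  also have "\<dots> \<le> 2 powr ((log 2 N - \<alpha> * L) * real m + L)"
  proof (rule powr_mono)
    have "L * (\<alpha> * real m - 1) \<le> L * real r" using assms(3) L0 by (rule mult_left_mono)
    then show "log 2 N * real m - L * real r \<le> (log 2 N - \<alpha> * L) * real m + L"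
      by (simp add: algebra_simps)
  qed auto
  also have "\<dots> = q * 2 powr ((log 2 N - \<alpha> * L) * real m)"
    unfolding L_def using assms by (simp add: powr_add)
  finally show ?thesis unfolding L_def .
qed

lemma lin_exp:
  fixes d :: real
  assumes "d > 0"
  shows "real m + 1 \<le> (1 / min 1 (2 powr d - 1)) * 2 powr (d * real m)"
proof -
  define b where "b = 2 powr d"
  have b1: "b > 1" unfolding b_def using assms by simp
  define c where "c = min 1 (b - 1)"
  have c0: "c > 0" unfolding c_def using b1 by simp
  have "1 + real m * (b - 1) \<le> (1 + (b - 1))^m" by (rule Bernoulli_inequality) (use b1 in auto)
  then have bern: "1 + real m * (b - 1) \<le> b^m" by simp
  have "c * (real m + 1) \<le> 1 + real m * (b - 1)"
  proof -
    have "c * real m \<le> (b - 1) * real m" unfolding c_def by (intro mult_right_mono) auto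
    moreover have "c \<le> 1" unfolding c_def by simp
    ultimately show ?thesis by (simp add: algebra_simps)
  qed
  with bern have "c * (real m + 1) \<le> b^m" by simp
  then have "real m + 1 \<le> b^m / c" using c0 by (simp add: field_simps)
  moreover have "b^m = 2 powr (d * real m)" unfolding b_def
    by (simp add: powr_powr[symmetric] powr_realpow)
  ultimately show ?thesis unfolding c_def b_def by simp
qed

lemma pow_div_bound:
  fixes N q :: real and m s :: nat
  assumes "q > 0" "N \<ge> 0" "N \<le> 2 * q" "s \<le> m"
  shows "N^m / q^(m - s) \<le> q^s * 2^m"
proof -
  have "N^m \<le> (2*q)^m" using assms by (intro power_mono) auto
  also have "\<dots> = 2^m * q^s * q^(m-s)"
    using assms(4) by (simp add: power_mult_distrib power_add[symmetric])
  finally show ?thesis using assms(1) by (simp add: divide_le_eq algebra_simps)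
qed

lemma floor_nat_ge: "real (nat \<lfloor>x\<rfloor>) \<ge> x - 1"
proof -
  have "x < real_of_int \<lfloor>x\<rfloor> + 1" by simp
  moreover have "real_of_int \<lfloor>x\<rfloor> \<le> real (nat \<lfloor>x\<rfloor>)" by (cases "\<lfloor>x\<rfloor> \<ge> 0") auto
  ultimately show ?thesis by linarith
qed

lemma three_pow: "(2::real)^(t+1) - 1 \<le> 3^t"
proof (induction t)
  case 0 then show ?case by simp
next
  case (Suc t)
  have "(2::real)^(Suc t + 1) - 1 = 2 * (2^(t+1) - 1) + 1" by simp
  also have "\<dots> \<le> 2 * 3^t + 1" using Suc by simp
  also have "\<dots> \<le> 3^Suc t" by simp
  finally show ?case .
qed

theorem corollary23:
  fixes t :: nat and \<beta> :: real
  assumes t: "1 \<le> t"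
    and beta: "\<beta> = log 2 (root (t + 1) (2 ^ (t + 1) - 1))"
  shows
    "(\<forall>r::nat. 1 \<le> r \<longrightarrow>
        (\<lambda>m. real (cover_cost t m r)) \<in> O(\<lambda>m. ((2::real) ^ m) ^ (t + 1)))
   \<and> (\<forall>\<alpha>::real. 0 < \<alpha> \<and> \<alpha> < t / ((t + 1) * \<beta>) \<longrightarrow>
        (\<lambda>m. real (cover_cost t m (nat \<lfloor>\<alpha> * m\<rfloor>)))
          \<in> O(\<lambda>m. ((2::real) ^ m) powr ((t + 1) * (1 - \<alpha> * \<beta>))))
   \<and> (\<forall>s::nat.
        (\<lambda>m. real (cover_cost t m (m - s))) \<in> O(\<lambda>m. (2::real) ^ m * log 2 ((2::real) ^ m)))
   \<and> (\<forall>\<alpha>::real. t / ((t + 1) * \<beta>) \<le> \<alpha> \<and> \<alpha> < 1 \<longrightarrow>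
        (\<lambda>m. real (cover_cost t m (nat \<lfloor>\<alpha> * m\<rfloor>)))
          \<in> O(\<lambda>m. (2::real) ^ m * log 2 ((2::real) ^ m)))"
proof -
  define q where "q = (2::real)^(t+1) - 1"
  define N where "N = (2::real)^(t+1)"
  define A where "A = real t * 2^t * q + 6 * real t + 5 * real t + 1"
  define L where "L = log 2 q"
  define L1 where "L1 = log 2 (3::real)"
  have cb: "\<And>m r. real (cover_cost t m r) \<le> A * (N^m / q^r + 4^m / 3^r + (real m + 1) * 2^m)"
    unfolding A_def q_def N_def by (rule cover_bound)
  have "(2::real)^2 \<le> 2^(t+1)" by (rule power_increasing) (use t in auto)
  then have q3: "q \<ge> 3" unfolding q_def by simp
  have A0: "A \<ge> 0" unfolding A_def using q3 by simp
  have Nq: "N = q + 1" unfolding N_def q_def by simp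
  have N4: "N \<ge> 4" using q3 Nq by simp
  have L1pos: "L1 > 0" unfolding L1_def by simp
  have LL1: "L1 \<le> L" unfolding L_def L1_def using q3 by simp
  have Lpos: "L > 0" using L1pos LL1 by simp
  have "L \<le> log 2 (3^t)" unfolding L_def q_def using three_pow[of t] q3 q_def by simp
  then have Lt: "L \<le> real t * L1" unfolding L1_def by (simp add: log_nat_power)
  have beq: "\<beta> = L / (real t + 1)"
    unfolding beta L_def q_def using q3 q_def by (subst log_root) auto
  have thr: "real t / ((real t + 1) * \<beta>) = real t / L"
    unfolding beq by simp
  have thr': "real t / ((1 + real t) * \<beta>) = real t / L" "real t / (real (t + 1) * \<beta>) = real t / L"
    using thr by (simp_all add: add.commute)
  have "log 2 ((2::real)^(t+1)) = real (t+1)" by (rule log_pow_cancel) auto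
  then have log2N: "log 2 N = real t + 1" unfolding N_def by simp
  have log24: "log 2 (4::real) = 2"
    using log_pow_cancel[of "2::real" 2] by simp
  have c1: "(\<forall>r::nat. 1 \<le> r \<longrightarrow>
        (\<lambda>m. real (cover_cost t m r)) \<in> O(\<lambda>m. ((2::real) ^ m) ^ (t + 1)))"
  proof (intro allI impI)
    fix r :: nat
    show "(\<lambda>m. real (cover_cost t m r)) \<in> O(\<lambda>m. ((2::real) ^ m) ^ (t + 1))"
    proof (rule bigoI[where c = "3*A"], rule always_eventually, rule allI)
      fix m :: nat
      have qr: "q^r \<ge> 1" using q3 by simp
      have "N^m / q^r \<le> N^m / 1" using qr N4 by (intro divide_left_mono) auto
      moreover have "(4::real)^m / 3^r \<le> 4^m / 1" by (intro divide_left_mono) auto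
      moreover have "(4::real)^m \<le> N^m" using N4 by (intro power_mono) auto
      moreover have "(real m + 1) * 2^m \<le> (4::real)^m"
      proof -
        have "m < 2^m" by (rule less_exp)
        then have "real m + 1 \<le> 2^m"
          by (metis Suc_leI of_nat_Suc of_nat_le_iff of_nat_numeral of_nat_power add.commute)
        then have "(real m + 1) * 2^m \<le> 2^m * 2^m" by (intro mult_right_mono) auto
        also have "\<dots> = (4::real)^m" by (simp add: power_mult_distrib[symmetric])
        finally show ?thesis .
      qed
      ultimately have "N^m / q^r + 4^m / 3^r + (real m + 1) * 2^m \<le> 3 * N^m" by simp
      then have "real (cover_cost t m r) \<le> A * (3 * N^m)"
        using cb[of m r] A0 by (meson mult_left_mono order_trans)
      moreover have "((2::real) ^ m) ^ (t + 1) = N^m" unfolding N_def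
        by (simp add: power_mult[symmetric] mult.commute)
      ultimately show "norm (real (cover_cost t m r)) \<le> 3 * A * norm (((2::real) ^ m) ^ (t + 1))"
        using N4 by simp
    qed
  qed
  have c2: "(\<forall>\<alpha>::real. 0 < \<alpha> \<and> \<alpha> < t / ((t + 1) * \<beta>) \<longrightarrow>
        (\<lambda>m. real (cover_cost t m (nat \<lfloor>\<alpha> * m\<rfloor>)))
          \<in> O(\<lambda>m. ((2::real) ^ m) powr ((t + 1) * (1 - \<alpha> * \<beta>))))"
  proof (intro allI impI)
    fix \<alpha> :: real
    assume a: "0 < \<alpha> \<and> \<alpha> < t / ((t + 1) * \<beta>)"
    then have a0: "\<alpha> > 0" and "\<alpha> < real t / L" using thr thr' by auto
    then have aL: "\<alpha> * L < real t" using Lpos by (simp add: field_simps)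
    define e where "e = real t + 1 - \<alpha> * L"
    define e1 where "e1 = 2 - \<alpha> * L1"
    have e1g: "e > 1" unfolding e_def using aL by simp
    have ee1: "e1 \<le> e"
    proof -
      have "\<alpha> * L \<le> real t * (\<alpha> * L1)" using Lt a0 by (metis mult.left_commute mult_left_mono less_imp_le)
      then have "real t * (\<alpha> * L - \<alpha> * L1) \<le> (real t - 1) * (\<alpha> * L)" by (simp add: algebra_simps)
      also have "\<dots> \<le> (real t - 1) * real t" using aL t by (intro mult_left_mono) auto
      finally have "real t * (\<alpha> * L - \<alpha> * L1) \<le> real t * (real t - 1)" by (simp add: algebra_simps)
      then have "\<alpha> * L - \<alpha> * L1 \<le> real t - 1" using t by (simp add: mult_le_cancel_left_pos)
      then show ?thesis unfolding e_def e1_def by simp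
    qed
    define C where "C = 1 / min 1 (2 powr (e - 1) - 1)"
    show "(\<lambda>m. real (cover_cost t m (nat \<lfloor>\<alpha> * m\<rfloor>)))
          \<in> O(\<lambda>m. ((2::real) ^ m) powr ((t + 1) * (1 - \<alpha> * \<beta>)))"
    proof (rule bigoI[where c = "A * (q + 3 + C)"], rule always_eventually, rule allI)
      fix m :: nat
      define r where "r = nat \<lfloor>\<alpha> * m\<rfloor>"
      have fr: "real r \<ge> \<alpha> * real m - 1" unfolding r_def by (rule floor_nat_ge)
      have X: "N^m / q^r \<le> q * 2 powr (e * real m)"
        using exp_bound[where N=N and q=q and r=r and \<alpha>=\<alpha> and m=m] fr q3 N4 unfolding e_def log2N L_def by simp
      have "(4::real)^m / 3^r \<le> 3 * 2 powr (e1 * real m)"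
        using exp_bound[where N=4 and q=3 and r=r and \<alpha>=\<alpha> and m=m] fr unfolding e1_def log24 L1_def by simp
      also have "\<dots> \<le> 3 * 2 powr (e * real m)"
        using ee1 by (intro mult_left_mono powr_mono mult_right_mono) auto
      finally have Y: "(4::real)^m / 3^r \<le> 3 * 2 powr (e * real m)" .
      have "(real m + 1) * 2^m \<le> (C * 2 powr ((e - 1) * real m)) * 2^m"
        unfolding C_def using lin_exp[where d="e - 1" and m=m] e1g by (intro mult_right_mono) auto
      also have "\<dots> = C * 2 powr (e * real m)"
        by (simp add: powr_realpow[symmetric] powr_add[symmetric] algebra_simps)
      finally have P: "(real m + 1) * 2^m \<le> C * 2 powr (e * real m)" .
      have "real (cover_cost t m r) \<le> A * (q * 2 powr (e * real m) + 3 * 2 powr (e * real m) + C * 2 powr (e * real m))"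
        using cb[of m r] A0 X Y P by (meson add_mono mult_left_mono order_trans)
      also have "\<dots> = A * (q + 3 + C) * 2 powr (e * real m)" by (simp add: algebra_simps)
      finally have bd: "real (cover_cost t m r) \<le> A * (q + 3 + C) * 2 powr (e * real m)" .
      have ex: "(real t + 1) * (1 - \<alpha> * \<beta>) = e" unfolding e_def beq by (simp add: field_simps)
      have "((2::real) ^ m) powr ((t + 1) * (1 - \<alpha> * \<beta>)) = (2 powr real m) powr e"
        using ex by (simp add: powr_realpow add.commute)
      also have "\<dots> = 2 powr (e * real m)" by (simp add: powr_powr mult.commute)
      finally have tg: "((2::real) ^ m) powr ((t + 1) * (1 - \<alpha> * \<beta>)) = 2 powr (e * real m)" .
      show "norm (real (cover_cost t m (nat \<lfloor>\<alpha> * m\<rfloor>)))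
          \<le> A * (q + 3 + C) * norm (((2::real) ^ m) powr ((t + 1) * (1 - \<alpha> * \<beta>)))"
        using bd tg unfolding r_def by simp
    qed
  qed
  have c3: "(\<forall>s::nat.
        (\<lambda>m. real (cover_cost t m (m - s))) \<in> O(\<lambda>m. (2::real) ^ m * log 2 ((2::real) ^ m)))"
  proof (intro allI)
    fix s :: nat
    show "(\<lambda>m. real (cover_cost t m (m - s))) \<in> O(\<lambda>m. (2::real) ^ m * log 2 ((2::real) ^ m))"
    proof (rule bigoI[where c = "A * (q^s + 3^s + 2)"])
      show "\<forall>\<^sub>F m in at_top. norm (real (cover_cost t m (m - s)))
          \<le> A * (q^s + 3^s + 2) * norm ((2::real) ^ m * log 2 ((2::real) ^ m))"
        using eventually_ge_at_top[of "max s 1"]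
      proof eventually_elim
        case (elim m)
        then have ms: "s \<le> m" and m1: "1 \<le> m" by auto
        have X: "N^m / q^(m-s) \<le> q^s * 2^m" using q3 Nq ms by (intro pow_div_bound) auto
        have Y: "(4::real)^m / 3^(m-s) \<le> 3^s * 2^m" using ms by (intro pow_div_bound) auto
        have "(real m + 1) * 2^m \<le> (2 * real m) * 2^m" using m1 by (intro mult_right_mono) auto
        then have "real (cover_cost t m (m - s)) \<le> A * (q^s * 2^m + 3^s * 2^m + (2 * real m) * 2^m)"
          using cb[of m "m - s"] A0 X Y by (meson add_mono mult_left_mono order_trans)
        also have "\<dots> \<le> A * (q^s * (real m * 2^m) + 3^s * (real m * 2^m) + 2 * (real m * 2^m))"
          using m1 q3 A0 by (intro mult_left_mono add_mono) auto
        also have "\<dots> = A * (q^s + 3^s + 2) * ((2::real) ^ m * log 2 ((2::real) ^ m))"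
          by (simp add: algebra_simps)
        finally show ?case by simp
      qed
    qed
  qed
  have c4: "(\<forall>\<alpha>::real. t / ((t + 1) * \<beta>) \<le> \<alpha> \<and> \<alpha> < 1 \<longrightarrow>
        (\<lambda>m. real (cover_cost t m (nat \<lfloor>\<alpha> * m\<rfloor>)))
          \<in> O(\<lambda>m. (2::real) ^ m * log 2 ((2::real) ^ m)))"
  proof (intro allI impI)
    fix \<alpha> :: real
    assume a: "t / ((t + 1) * \<beta>) \<le> \<alpha> \<and> \<alpha> < 1"
    then have "real t / L \<le> \<alpha>" using thr thr' by auto
    then have aL: "real t \<le> \<alpha> * L" using Lpos by (simp add: field_simps)
    have a0: "\<alpha> > 0"
    proof -
      have "real t / L > 0" using t Lpos by simp
      with \<open>real t / L \<le> \<alpha>\<close> show ?thesis by linarith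
    qed
    define e where "e = real t + 1 - \<alpha> * L"
    define e1 where "e1 = 2 - \<alpha> * L1"
    have e1l: "e \<le> 1" unfolding e_def using aL by simp
    have ee1: "e1 \<le> 1"
    proof -
      have "\<alpha> * L \<le> real t * (\<alpha> * L1)" using Lt a0 by (metis mult.left_commute mult_left_mono less_imp_le)
      with aL have "real t * 1 \<le> real t * (\<alpha> * L1)" by simp
      then have "1 \<le> \<alpha> * L1" using t by (simp add: mult_le_cancel_left_pos)
      then show ?thesis unfolding e1_def by simp
    qed
    show "(\<lambda>m. real (cover_cost t m (nat \<lfloor>\<alpha> * m\<rfloor>)))
          \<in> O(\<lambda>m. (2::real) ^ m * log 2 ((2::real) ^ m))"
    proof (rule bigoI[where c = "A * (q + 3 + 2)"])
      show "\<forall>\<^sub>F m in at_top. norm (real (cover_cost t m (nat \<lfloor>\<alpha> * m\<rfloor>)))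
          \<le> A * (q + 3 + 2) * norm ((2::real) ^ m * log 2 ((2::real) ^ m))"
        using eventually_ge_at_top[of "1::nat"]
      proof eventually_elim
        case (elim m)
        then have m1: "1 \<le> m" by auto
        define r where "r = nat \<lfloor>\<alpha> * m\<rfloor>"
        have fr: "real r \<ge> \<alpha> * real m - 1" unfolding r_def by (rule floor_nat_ge)
        have p2: "(2::real)^m = 2 powr (1 * real m)" by (simp add: powr_realpow)
        have "N^m / q^r \<le> q * 2 powr (e * real m)"
          using exp_bound[where N=N and q=q and r=r and \<alpha>=\<alpha> and m=m] fr q3 N4 unfolding e_def log2N L_def by simp
        also have "\<dots> \<le> q * 2^m"
          unfolding p2 using e1l q3 by (intro mult_left_mono powr_mono mult_right_mono) auto
        finally have X: "N^m / q^r \<le> q * 2^m" .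
        have "(4::real)^m / 3^r \<le> 3 * 2 powr (e1 * real m)"
          using exp_bound[where N=4 and q=3 and r=r and \<alpha>=\<alpha> and m=m] fr unfolding e1_def log24 L1_def by simp
        also have "\<dots> \<le> 3 * 2^m"
          unfolding p2 using ee1 by (intro mult_left_mono powr_mono mult_right_mono) auto
        finally have Y: "(4::real)^m / 3^r \<le> 3 * 2^m" .
        have "(real m + 1) * 2^m \<le> (2 * real m) * 2^m" using m1 by (intro mult_right_mono) auto
        then have "real (cover_cost t m r) \<le> A * (q * 2^m + 3 * 2^m + (2 * real m) * 2^m)"
          using cb[of m r] A0 X Y by (meson add_mono mult_left_mono order_trans)
        also have "\<dots> \<le> A * (q * (real m * 2^m) + 3 * (real m * 2^m) + 2 * (real m * 2^m))"
          using m1 q3 A0 by (intro mult_left_mono add_mono) auto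
        also have "\<dots> = A * (q + 3 + 2) * ((2::real) ^ m * log 2 ((2::real) ^ m))"
          by (simp add: algebra_simps)
        finally show ?case unfolding r_def by simp
      qed
    qed
  qed
  show ?thesis using c1 c2 c3 c4 by blast
qed

end
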